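(* Let $\mu$ be a log-concave probability measure on $\mathbb R^n$ and let $\psi:\mathbb R^n\to\mathbb R$ be a convex map with $\psi\in L_1(\mu)$. Let $Z\sim\mu$, $F(t)=\mathbb P(\psi(Z)\leqslant t)$, $t\in\mathbb R$, and $f=F'$. Then $$f(m)\geqslant\frac{1}{32\,\|(\psi-m)_+\|_{L_1(\mu)}},$$ where $m$ is a median of $\psi$ with respect to $\mu$.
   Context: $(x)_+=\max\{x,0\}$. *)

theory Defs
  imports "HOL-Probability.Probability"
begin

text \<open>Compact sets are used so
  that the Minkowski combination is Borel; by inner regularity this is equivalent to the
  usual definition with inner measure on Borel sets.\<close>
definition log_concave_measure :: "'a::euclidean_space measure \<Rightarrow> bool" where
  "log_concave_measure M \<longleftrightarrow>
     sets M = sets borel \<and>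
     (\<forall>A B t. compact A \<longrightarrow> compact B \<longrightarrow> A \<noteq> {} \<longrightarrow> B \<noteq> {} \<longrightarrow> 0 < t \<longrightarrow> t < 1 \<longrightarrow>
        measure M {t *\<^sub>R a + (1 - t) *\<^sub>R b | a b. a \<in> A \<and> b \<in> B}
          \<ge> measure M A powr t * measure M B powr (1 - t))"

definition is_median :: "'a measure \<Rightarrow> ('a \<Rightarrow> real) \<Rightarrow> real \<Rightarrow> bool" where
  "is_median M g m \<longleftrightarrow>
     measure M {x \<in> space M. g x \<le> m} \<ge> 1/2 \<and> measure M {x \<in> space M. g x \<ge> m} \<ge> 1/2"

end

theory Submission
  imports Defs
begin

lemma lc_sublevel:
  fixes \<mu> :: "'a::euclidean_space measure" and \<psi> :: "'a \<Rightarrow> real"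
  assumes P: "prob_space \<mu>" and LC: "log_concave_measure \<mu>"
    and cv: "convex_on UNIV \<psi>" and \<tau>: "0 < \<tau>" "\<tau> < 1"
    and ps: "measure \<mu> {x. \<psi> x \<le> s} > 0" and pt: "measure \<mu> {x. \<psi> x \<le> t} > 0"
  shows "measure \<mu> {x. \<psi> x \<le> \<tau> * s + (1 - \<tau>) * t}
     \<ge> measure \<mu> {x. \<psi> x \<le> s} powr \<tau> * measure \<mu> {x. \<psi> x \<le> t} powr (1 - \<tau>)"
proof -
  interpret prob_space \<mu> by (fact P)
  have sets: "sets \<mu> = sets borel" using LC unfolding log_concave_measure_def by blast
  have cont: "continuous_on UNIV \<psi>" using convex_on_continuous[OF open_UNIV cv] .
  have clo: "closed {x. \<psi> x \<le> r}" for r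
    by (rule closed_Collect_le[OF cont continuous_on_const])
  define A where "A r n = {x. \<psi> x \<le> r} \<inter> cball 0 (real n)" for r n
  have cA: "compact (A r n)" for r n unfolding A_def
    by (intro closed_Int_compact clo compact_cball)
  have sA: "A r n \<in> sets \<mu>" for r n using cA sets by (simp add: borel_closed compact_imp_closed)
  have limA: "(\<lambda>n. measure \<mu> (A r n)) \<longlonglongrightarrow> measure \<mu> {x. \<psi> x \<le> r}" for r
  proof -
    have "(\<lambda>n. measure \<mu> (A r n)) \<longlonglongrightarrow> measure \<mu> (\<Union>n. A r n)"
      proof (rule finite_Lim_measure_incseq)
      show "range (A r) \<subseteq> sets \<mu>" using sA by blast
      show "incseq (A r)" unfolding incseq_def A_def by auto
    qed
    moreover have "(\<Union>n. A r n) = {x. \<psi> x \<le> r}"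
      by (auto simp: A_def real_arch_simple)
    ultimately show ?thesis by simp
  qed
  have nonempty: "eventually (\<lambda>n. A r n \<noteq> {}) sequentially" if "measure \<mu> {x. \<psi> x \<le> r} > 0" for r
  proof -
    from that obtain x0 where "\<psi> x0 \<le> r"
      by (metis (no_types, lifting) Collect_empty_eq less_irrefl measure_empty)
    moreover obtain N :: nat where "norm x0 \<le> real N" using real_arch_simple by blast
    ultimately show ?thesis
      unfolding eventually_sequentially A_def
      by (intro exI[of _ N] allI impI) (auto intro: order_trans[of _ "real N"])
  qed
  define C where "C n = {\<tau> *\<^sub>R a + (1 - \<tau>) *\<^sub>R b | a b. a \<in> A s n \<and> b \<in> A t n}" for n
  have Csub: "C n \<subseteq> {x. \<psi> x \<le> \<tau> * s + (1 - \<tau>) * t}" for n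
  proof
    fix x assume "x \<in> C n"
    then obtain a b where x: "x = \<tau> *\<^sub>R a + (1 - \<tau>) *\<^sub>R b" and a: "\<psi> a \<le> s" and b: "\<psi> b \<le> t"
      unfolding C_def A_def by blast
    have "\<psi> ((1 - (1 - \<tau>)) *\<^sub>R a + (1 - \<tau>) *\<^sub>R b) \<le> (1 - (1 - \<tau>)) * \<psi> a + (1 - \<tau>) * \<psi> b"
      by (rule convex_onD[OF cv]) (use \<tau> in auto)
    then have "\<psi> x \<le> \<tau> * \<psi> a + (1 - \<tau>) * \<psi> b" by (simp add: x)
    also have "\<dots> \<le> \<tau> * s + (1 - \<tau>) * t"
      using a b \<tau> by (intro add_mono mult_left_mono) auto
    finally show "x \<in> {x. \<psi> x \<le> \<tau> * s + (1 - \<tau>) * t}" by simp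
  qed
  have Ccomp: "compact (C n)" for n
  proof -
    have "C n = (\<lambda>p. \<tau> *\<^sub>R fst p + (1 - \<tau>) *\<^sub>R snd p) ` (A s n \<times> A t n)"
      unfolding C_def by force
    moreover have "compact ((\<lambda>p. \<tau> *\<^sub>R fst p + (1 - \<tau>) *\<^sub>R snd p) ` (A s n \<times> A t n))"
      by (intro compact_continuous_image compact_Times cA continuous_intros)
    ultimately show ?thesis by simp
  qed
  have sB: "{x. \<psi> x \<le> r} \<in> sets \<mu>" for r using clo sets by (simp add: borel_closed)
  have ev: "eventually (\<lambda>n. measure \<mu> (A s n) powr \<tau> * measure \<mu> (A t n) powr (1 - \<tau>)
        \<le> measure \<mu> {x. \<psi> x \<le> \<tau> * s + (1 - \<tau>) * t}) sequentially"
    using nonempty[OF ps] nonempty[OF pt]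
  proof eventually_elim
    case (elim n)
    have "measure \<mu> (A s n) powr \<tau> * measure \<mu> (A t n) powr (1 - \<tau>) \<le> measure \<mu> (C n)"
      using LC elim \<tau> cA unfolding log_concave_measure_def C_def by blast
    also have "\<dots> \<le> measure \<mu> {x. \<psi> x \<le> \<tau> * s + (1 - \<tau>) * t}"
      by (intro finite_measure_mono Csub sB)
    finally show ?case .
  qed
  have lim: "(\<lambda>n. measure \<mu> (A s n) powr \<tau> * measure \<mu> (A t n) powr (1 - \<tau>))
     \<longlonglongrightarrow> measure \<mu> {x. \<psi> x \<le> s} powr \<tau> * measure \<mu> {x. \<psi> x \<le> t} powr (1 - \<tau>)"
    using ps pt by (intro tendsto_mult tendsto_powr limA tendsto_const) auto
  show ?thesis by (rule tendsto_le[OF _ tendsto_const lim ev]) simp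
qed

lemma ln_three_halves: "ln (3/2::real) \<ge> 1/4"
proof -
  have "ln (2/3::real) \<le> 2/3 - 1" by (rule ln_le_minus_one) simp
  moreover have "ln (2/3::real) = - ln (3/2)"
    using ln_inverse[of "3/2::real"] by simp
  ultimately show ?thesis by simp
qed

theorem lemma5p4:
  fixes \<mu> :: "'a::euclidean_space measure" and \<psi> :: "'a \<Rightarrow> real"
    and F :: "real \<Rightarrow> real" and m f :: real
  assumes "prob_space \<mu>"
    and "log_concave_measure \<mu>"
    and "convex_on UNIV \<psi>"
    and "integrable \<mu> \<psi>"
    and "\<And>t. F t = measure \<mu> {x \<in> space \<mu>. \<psi> x \<le> t}"
    and "is_median \<mu> \<psi> m"
    and "(F has_real_derivative f) (at m)"
  shows "f \<ge> 1 / (32 * (\<integral>x. max (\<psi> x - m) 0 \<partial>\<mu>))"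
proof -
  note P = assms(1) and LC = assms(2) and cv = assms(3) and int = assms(4)
    and Fdef = assms(5) and med = assms(6) and D = assms(7)
  interpret prob_space \<mu> by (fact P)
  have sets: "sets \<mu> = sets borel" using LC unfolding log_concave_measure_def by blast
  have sp: "space \<mu> = UNIV" using sets_eq_imp_space_eq[OF sets] by simp
  have F: "F t = measure \<mu> {x. \<psi> x \<le> t}" for t using Fdef[of t] by (simp add: sp)
  have [measurable]: "\<psi> \<in> borel_measurable \<mu>" using int by (rule borel_measurable_integrable)
  have sL: "{x. \<psi> x \<le> r} \<in> sets \<mu>" for r
  proof -
    have "{x \<in> space \<mu>. \<psi> x \<le> r} \<in> sets \<mu>" by measurable
    then show ?thesis by (simp add: sp)
  qed
  have sG: "{x. r \<le> \<psi> x} \<in> sets \<mu>" for r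
  proof -
    have "{x \<in> space \<mu>. r \<le> \<psi> x} \<in> sets \<mu>" by measurable
    then show ?thesis by (simp add: sp)
  qed
  have Fmono: "F a \<le> F b" if "a \<le> b" for a b
    unfolding F using that by (intro finite_measure_mono sL) auto
  have Fm1: "F m \<ge> 1/2" using med unfolding is_median_def by (simp add: Fdef)
  have Fm2: "F m \<le> 1/2"
  proof -
    have "isCont F m" using D by (rule DERIV_isCont)
    then have lim: "(F \<longlongrightarrow> F m) (at_left m)"
      using filterlim_at_split isCont_def by blast
    have ev: "eventually (\<lambda>y. F y \<le> 1/2) (at_left m)"
    proof (rule eventually_at_leftI[of "m - 1"])
      fix y assume y: "y \<in> {m - 1<..<m}"
      have "F y \<le> measure \<mu> (space \<mu> - {x. m \<le> \<psi> x})"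
        unfolding F
      proof (rule finite_measure_mono)
        show "space \<mu> - {x. m \<le> \<psi> x} \<in> sets \<mu>" using sG by blast
        show "{x. \<psi> x \<le> y} \<subseteq> space \<mu> - {x. m \<le> \<psi> x}" using y by (auto simp: sp)
      qed
      also have "\<dots> = 1 - measure \<mu> {x. m \<le> \<psi> x}" using sG by (rule prob_compl)
      also have "\<dots> \<le> 1/2" using med unfolding is_median_def by (simp add: sp)
      finally show "F y \<le> 1/2" .
    qed simp
    show ?thesis by (rule tendsto_upperbound[OF lim ev]) simp
  qed
  have Fm: "F m = 1/2" using Fm1 Fm2 by simp
  have Dr: "((\<lambda>h. (F (m + h) - F m) / h) \<longlongrightarrow> f) (at_right 0)"
    using D unfolding DERIV_def using filterlim_at_split by blast
  define E where "E = (\<integral>x. max (\<psi> x - m) 0 \<partial>\<mu>)"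
  have E0: "E \<ge> 0" unfolding E_def by (intro integral_nonneg_AE) auto
  show ?thesis
  proof (cases "E = 0")
    case True
    have ev: "eventually (\<lambda>h. 0 \<le> (F (m + h) - F m) / h) (at_right 0)"
    proof (rule eventually_at_rightI[of 0 1])
      fix h :: real assume "h \<in> {0<..<1}"
      then show "0 \<le> (F (m + h) - F m) / h" using Fmono[of m "m+h"] by simp
    qed simp
    have "0 \<le> f" by (rule tendsto_lowerbound[OF Dr ev]) simp
    then show ?thesis using True by (simp add: E_def)
  next
    case False
    then have Epos: "E > 0" using E0 by simp
    define t where "t = m + 4 * E"
    have intu: "integrable \<mu> (\<lambda>x. max (\<psi> x - m) 0)"
    proof -
      have "integrable \<mu> (\<lambda>x. \<psi> x - m)" using int by simp
      then show ?thesis by (intro integrable_max) auto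
    qed
    have mk: "measure \<mu> {x \<in> space \<mu>. max (\<psi> x - m) 0 \<ge> 4 * E} \<le> E / (4 * E)"
      unfolding E_def
      by (rule integral_Markov_inequality_measure[OF intu, of "space \<mu>"])
         (use Epos in \<open>auto simp: E_def\<close>)
    have "{x \<in> space \<mu>. max (\<psi> x - m) 0 \<ge> 4 * E} = {x. t \<le> \<psi> x}"
      using Epos by (auto simp: sp t_def)
    with mk Epos have mk2: "measure \<mu> {x. t \<le> \<psi> x} \<le> 1/4" by simp
    have Ft: "F t \<ge> 3/4"
    proof -
      have "F t \<ge> F (t - 1)" by (rule Fmono) simp
      have "measure \<mu> (space \<mu> - {x. t \<le> \<psi> x}) = 1 - measure \<mu> {x. t \<le> \<psi> x}"
        using sG by (rule prob_compl)
      moreover have "measure \<mu> (space \<mu> - {x. t \<le> \<psi> x}) \<le> F t"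
        unfolding F by (intro finite_measure_mono sL) (auto simp: sp)
      ultimately show ?thesis using mk2 by simp
    qed
    have ev: "eventually (\<lambda>h. 1 / (32 * E) \<le> (F (m + h) - F m) / h) (at_right 0)"
    proof (rule eventually_at_rightI[of 0 "4 * E"])
      fix h :: real assume h: "h \<in> {0<..<4 * E}"
      define l where "l = h / (4 * E)"
      have l: "0 < l" "l < 1" using h Epos by (auto simp: l_def)
      have mid: "(1 - l) * m + (1 - (1 - l)) * t = m + h"
        using Epos by (simp add: l_def t_def field_simps)
      have "F m powr (1 - l) * F t powr (1 - (1 - l)) \<le> F ((1 - l) * m + (1 - (1 - l)) * t)"
        unfolding F by (rule lc_sublevel[OF P LC cv]) (use l Fm Ft in \<open>auto simp: F\<close>)
      then have "F m powr (1 - l) * F t powr (1 - (1 - l)) \<le> F (m + h)"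
        by (simp only: mid)
      moreover have "(1/2) powr (1 - l) * (3/4) powr l \<le> F m powr (1 - l) * F t powr (1 - (1 - l))"
      proof -
        have "(3/4) powr l \<le> F t powr l" using Ft l by (intro powr_mono2) auto
        then have "(1/2) powr (1 - l) * (3/4) powr l \<le> (1/2) powr (1 - l) * F t powr l"
          by (rule mult_left_mono) simp
        then show ?thesis by (simp only: Fm) simp
      qed
      moreover have "(1/2::real) powr (1 - l) * (3/4) powr l = (1/2) * (3/2) powr l"
      proof -
        have "(3/4::real) powr l = (1/2) powr l * (3/2) powr l"
          using powr_mult[of "1/2::real" "3/2" l] by simp
        moreover have "(1/2::real) powr (1 - l) * (1/2) powr l = 1/2"
          using powr_add[of "1/2::real" "1 - l" l] by simp
        ultimately show ?thesis by (simp add: algebra_simps)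
      qed
      moreover have "(3/2::real) powr l \<ge> 1 + l / 4"
      proof -
        have "(3/2::real) powr l = exp (l * ln (3/2))" by (simp add: powr_def)
        also have "\<dots> \<ge> 1 + l * ln (3/2)" by (rule exp_ge_add_one_self)
        finally have "1 + l * ln (3/2) \<le> (3/2::real) powr l" .
        moreover have "l / 4 \<le> l * ln (3/2)"
          using mult_left_mono[OF ln_three_halves, of l] l by simp
        ultimately show ?thesis by linarith
      qed
      ultimately have "F (m + h) \<ge> 1/2 + l / 8" by simp
      then have "F (m + h) - F m \<ge> h / (32 * E)" using Fm by (simp add: l_def)
      then show "1 / (32 * E) \<le> (F (m + h) - F m) / h"
        using h by (simp add: field_simps)
    qed (use Epos in simp)
    have "1 / (32 * E) \<le> f" by (rule tendsto_lowerbound[OF Dr ev]) simp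
    then show ?thesis by (simp add: E_def)
  qed
qed

end
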